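(* Let $\alpha\in\mathbb{R}$, let $p$ be a positive integer, $a\in\mathbb{R}$, and let $f$ be defined only on $\mathbb{N}_a$. Then for all $t\in\mathbb{N}_{a+2p-1}$, $$\nabla_{a+p-1}^{-\alpha}\nabla^p f(t)=\nabla^p\nabla_{a+p-1}^{-\alpha}f(t)-\sum_{k=0}^{p-1}\frac{(t-(a+p-1))^{\overline{\alpha-p+k}}}{\Gamma(\alpha+k-p+1)}\nabla^k f(a+p-1).$$
   Context: Notation: $\mathbb{N}_c=\{c,c+1,\dots\}$, $\rho(t)=t-1$, $\nabla g(t)=g(t)-g(t-1)$, $\nabla^m=\nabla(\nabla^{m-1})$. Rising factorial: $t^{\overline{\beta}}=\Gamma(t+\beta)/\Gamma(t)$ with $0^{\overline{\beta}}=0$; the reciprocal of $\Gamma$ at a pole is $0$. For $\gamma>0$ and starting point $c$, the nabla left fractional sum is $\nabla_c^{-\gamma}g(t)=\frac{1}{\Gamma(\gamma)}\sum_{s=c+1}^{t}(t-\rho(s))^{\overline{\gamma-1}}g(s)$, a sum with upper limit smaller than lower limit being $0$. For $\beta>0$ let $n=[\beta]+1$ with $[\beta]$ the greatest integer strictly less than $\beta$; the nabla left fractional difference is $\nabla_c^{\beta}g(t)=\nabla^n\nabla_c^{-(n-\beta)}g(t)$ (order-$0$ operator = identity). For $\alpha<0$, $\nabla_c^{-\alpha}$ denotes the nabla left fractional difference of order $-\alpha$; for $\alpha=0$ the identity. *)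

theory Defs
  imports "HOL-Analysis.Analysis"
begin

definition Nset :: "real \<Rightarrow> real set" where
  "Nset c = {c + real n | n. True}"

text \<open>Rising factorial t^(beta) = Gamma(t+beta)/Gamma(t), with 0^(beta) = 0 and
  the reciprocal of Gamma at a pole equal to 0 (rGamma).\<close>
definition rising :: "real \<Rightarrow> real \<Rightarrow> real" where
  "rising t \<beta> = (if t = 0 then 0 else Gamma (t + \<beta>) * rGamma t)"

definition nabla :: "(real \<Rightarrow> real) \<Rightarrow> real \<Rightarrow> real" where
  "nabla g t = g t - g (t - 1)"

definition nabla_pow :: "nat \<Rightarrow> (real \<Rightarrow> real) \<Rightarrow> real \<Rightarrow> real" where
  "nabla_pow m g = (nabla ^^ m) g"

text \<open>Nabla left fractional sum of order gamma > 0 with starting point c: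
  sum over s = c+1, ..., t (s = c + k, k = 1 .. t - c); empty if t < c + 1.\<close>
definition nabla_frac_sum :: "real \<Rightarrow> real \<Rightarrow> (real \<Rightarrow> real) \<Rightarrow> real \<Rightarrow> real" where
  "nabla_frac_sum c \<gamma> g t =
     rGamma \<gamma> * (\<Sum>k\<in>{1..nat \<lfloor>t - c\<rfloor>}.
        rising (t - (c + real k - 1)) (\<gamma> - 1) * g (c + real k))"

text \<open>General operator nabla_c^mu: for mu < 0 the fractional sum of order -mu,
  for mu = 0 the identity, for mu > 0 the fractional difference
  nabla^n nabla_c^(-(n - mu)) with n = [mu] + 1 = ceiling mu (order-0 sum = identity).\<close>
definition nabla_frac :: "real \<Rightarrow> real \<Rightarrow> (real \<Rightarrow> real) \<Rightarrow> real \<Rightarrow> real" where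
  "nabla_frac c \<mu> g =
     (if \<mu> < 0 then nabla_frac_sum c (- \<mu>) g
      else if \<mu> = 0 then g
      else (let n = nat \<lceil>\<mu>\<rceil> in
            nabla_pow n (if real n - \<mu> = 0 then g else nabla_frac_sum c (real n - \<mu>) g)))"

end

theory Submission imports Defs begin

lemma Gamma_p1: "(z::real) \<noteq> 0 \<Longrightarrow> Gamma (z + 1) = z * Gamma z"
proof -
  assume z: "z \<noteq> 0"
  have "rGamma (z+1) = rGamma z / z" using rGamma_plus1[of z] z by (simp add: field_simps)
  thus ?thesis unfolding Gamma_def by (simp add: field_simps)
qed

lemma rGamma_p1: "(z::real) \<noteq> 0 \<Longrightarrow> rGamma (z + 1) = rGamma z / z"
  using rGamma_plus1[of z] by (simp add: field_simps)

lemma notnp_int: "x \<in> \<int>\<^sub>\<le>\<^sub>0 \<Longrightarrow> (x::real) \<in> \<int>" by auto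

lemma powA:
  fixes N :: nat and \<beta> :: real
  assumes "N \<ge> 2"
  shows "(rising (real N) \<beta> - rising (real N - 1) \<beta>) * rGamma (\<beta> + 1)
         = rising (real N) (\<beta> - 1) * rGamma \<beta>"
proof -
  define z where "z = real N - 1"
  have z1: "z \<ge> 1" using assms unfolding z_def by simp
  have xN: "real N = z + 1" unfolding z_def by simp
  show ?thesis
  proof (cases "\<beta> \<in> \<int>\<^sub>\<le>\<^sub>0")
    case True
    show ?thesis
    proof (cases "\<beta> = 0")
      case True
      have a: "Gamma (z+1) * rGamma (z+1) = 1" "Gamma z * rGamma z = 1"
        using z1 rGamma_eq_zero_iff[of "z+1"] rGamma_eq_zero_iff[of z]
        by (auto simp: Gamma_def dest!: nonpos_Ints_nonpos)
      show ?thesis using True z1 a unfolding rising_def xN by simp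
    next
      case False
      then have "\<beta> + 1 \<in> \<int>\<^sub>\<le>\<^sub>0" using True
        by (auto elim!: nonpos_Ints_cases intro!: nonpos_Ints_of_int[where n="_ + 1", simplified])
      then show ?thesis using True by (simp add: rGamma_nonpos_Int)
    qed
  next
    case False
    have b0: "\<beta> \<noteq> 0" using False by auto
    have zb: "z + \<beta> \<noteq> 0"
    proof
      assume "z + \<beta> = 0"
      then have "\<beta> = - real (N - 1)" using assms unfolding z_def by (simp add: of_nat_diff)
      then show False using False by simp
    qed
    have g: "Gamma (z + \<beta> + 1) = (z+\<beta>) * Gamma (z+\<beta>)" using Gamma_p1[OF zb] .
    have r: "rGamma (z + 1) = rGamma z / z" using rGamma_p1[of z] z1 by simp
    have rb: "rGamma (\<beta> + 1) = rGamma \<beta> / \<beta>" using rGamma_p1[OF b0] .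
    have e1: "z + 1 + \<beta> = z + \<beta> + 1" "z + 1 + (\<beta> - 1) = z + \<beta>" "z + 1 - 1 = z" by simp_all
    have R1: "rising (z+1) \<beta> = (z+\<beta>) * Gamma (z+\<beta>) * (rGamma z / z)"
      unfolding rising_def using z1 by (simp add: e1 g r)
    have R2: "rising (z+1) (\<beta>-1) = Gamma (z+\<beta>) * (rGamma z / z)"
      unfolding rising_def using z1 by (simp add: e1 r)
    have R3: "rising (z+1-1) \<beta> = Gamma (z+\<beta>) * rGamma z"
      unfolding rising_def using z1 by (simp add: add.commute)
    show ?thesis unfolding xN R1 R2 R3 rb using z1 b0
      by (simp add: field_simps)
  qed
qed

lemma rising_nonpos: "m \<le> 0 \<Longrightarrow> rising (of_int m) \<beta> = 0"
  unfolding rising_def by (auto simp: rGamma_nonpos_Int nonpos_Ints_of_int)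

lemma powB:
  fixes m :: int and \<beta> :: real
  assumes "\<beta> \<notin> \<int>"
  shows "rising (of_int m) \<beta> - rising (of_int m - 1) \<beta> = \<beta> * rising (of_int m) (\<beta> - 1)"
proof -
  have b0: "\<beta> \<noteq> 0" using assms by auto
  consider "m \<le> 0" | "m = 1" | "m \<ge> 2" by linarith
  then show ?thesis
  proof cases
    case 1
    have "rising (of_int m - 1) \<beta> = 0" using rising_nonpos[of "m-1" \<beta>] 1 by simp
    then show ?thesis using 1 by (simp add: rising_nonpos)
  next
    case 2
    have "Gamma (\<beta> + 1) = \<beta> * Gamma \<beta>" using Gamma_p1[OF b0] .
    then show ?thesis using 2 unfolding rising_def by (simp add: add.commute)
  next
    case 3
    define z where "z = (of_int m :: real) - 1"
    have z1: "z \<ge> 1" using 3 unfolding z_def by simp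
    have xN: "of_int m = z + 1" unfolding z_def by simp
    have zb: "z + \<beta> \<noteq> 0"
    proof
      assume "z + \<beta> = 0"
      then have "\<beta> = of_int (1 - m)" unfolding z_def by simp
      then show False using assms by simp
    qed
    have e1: "z + 1 + \<beta> = z + \<beta> + 1" "z + 1 + (\<beta> - 1) = z + \<beta>" "z + 1 - 1 = z" by simp_all
    have g: "Gamma (z + \<beta> + 1) = (z+\<beta>) * Gamma (z+\<beta>)" using Gamma_p1[OF zb] .
    have r: "rGamma (z + 1) = rGamma z / z" using rGamma_p1[of z] z1 by simp
    have R1: "rising (z+1) \<beta> = (z+\<beta>) * Gamma (z+\<beta>) * (rGamma z / z)"
      unfolding rising_def using z1 by (simp add: e1 g r)
    have R2: "rising (z+1) (\<beta>-1) = Gamma (z+\<beta>) * (rGamma z / z)"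
      unfolding rising_def using z1 by (simp add: e1 r)
    have R3: "rising (z+1-1) \<beta> = Gamma (z+\<beta>) * rGamma z"
      unfolding rising_def using z1 by (simp add: add.commute)
    show ?thesis unfolding xN R1 R2 R3 using z1 b0
      by (simp add: field_simps)
  qed
qed

lemma np_Suc: "nabla_pow (Suc n) g x = nabla_pow n g x - nabla_pow n g (x - 1)"
  unfolding nabla_pow_def by (simp add: nabla_def)

lemma np_comm: "nabla_pow n (nabla g) = nabla (nabla_pow n g)"
  unfolding nabla_pow_def by (simp add: funpow_swap1)

lemma np_0[simp]: "nabla_pow 0 g = g" unfolding nabla_pow_def by simp

lemma np_lin: "nabla_pow n (\<lambda>x. A x - k * B x) y = nabla_pow n A y - k * nabla_pow n B y"
  by (induction n arbitrary: y) (simp_all add: np_Suc algebra_simps)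

lemma np_cong:
  assumes "\<And>m::int. A (c + of_int m) = B (c + of_int m)"
  shows "nabla_pow n A (c + of_int m) = nabla_pow n B (c + of_int m)"
proof (induction n arbitrary: m)
  case 0 then show ?case using assms by simp
next
  case (Suc n)
  have e: "c + of_int m - 1 = c + of_int (m - 1)" by simp
  show ?case unfolding np_Suc e using Suc.IH[of m] Suc.IH[of "m-1"] by simp
qed

lemma fs_int: "nabla_frac_sum c \<gamma> g (c + of_int m) =
   rGamma \<gamma> * (\<Sum>k\<in>{1..nat m}. rising (of_int m - real k + 1) (\<gamma> - 1) * g (c + real k))"
proof -
  have e: "c + of_int m - (c + real k - 1) = of_int m - real k + 1" for k by simp
  show ?thesis unfolding nabla_frac_sum_def e by simp
qed

lemma sum_shift1: fixes F :: "nat \<Rightarrow> real" and M :: nat shows "M \<ge> 1 \<Longrightarrow> (\<Sum>k=1..M. F k) = F 1 + (\<Sum>k=1..M-1. F (k+1)::real)"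
proof (induction M)
  case 0 then show ?case by simp
next
  case (Suc M)
  show ?case
  proof (cases "M = 0")
    case True then show ?thesis by simp
  next
    case False
    then have "(\<Sum>k=1..Suc M. F k) = (\<Sum>k=1..M. F k) + F (Suc M)" by simp
    also have "\<dots> = F 1 + (\<Sum>k=1..M-1. F (k+1)) + F (Suc M)" using Suc False by simp
    also have "\<dots> = F 1 + (\<Sum>k=1..M. F (k+1))"
      using False by (cases M) (simp_all)
    finally show ?thesis by simp
  qed
qed

lemma L_sum:
  "nabla_frac_sum c \<gamma> (nabla g) (c + of_int m) =
     nabla (nabla_frac_sum c \<gamma> g) (c + of_int m) - rising (of_int m) (\<gamma> - 1) * rGamma \<gamma> * g c"
proof -
  have e: "c + of_int m - 1 = c + of_int (m - 1)" by simp
  have nb: "nabla h (c + of_int m) = h (c + of_int m) - h (c + of_int (m - 1))" for h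
    unfolding nabla_def e ..
  show ?thesis
  proof (cases "m \<le> 0")
    case True
    then show ?thesis unfolding nb fs_int by (simp add: rising_nonpos)
  next
    case False
    then obtain M where M: "m = int M" "M \<ge> 1" by (metis nat_0_le nat_le_iff not_le of_nat_0_less_iff
        linorder_not_less zero_less_iff_neq_zero less_one not_less_iff_gr_or_eq int_one_le_iff_zero_less)
    define w where "w j = rising j (\<gamma> - 1)" for j
    have A: "(\<Sum>k=1..M. w (real M - real k + 1) * nabla g (c + real k)) =
             (\<Sum>k=1..M. w (real M - real k + 1) * g (c + real k))
           - (\<Sum>k=1..M. w (real M - real k + 1) * g (c + real k - 1))"
      unfolding nabla_def by (simp add: algebra_simps sum_subtractf)
    have B: "(\<Sum>k=1..M. w (real M - real k + 1) * g (c + real k - 1)) =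
             w (real M) * g c + (\<Sum>k=1..M-1. w ((real M - 1) - real k + 1) * g (c + real k))"
      using sum_shift1[OF M(2), of "\<lambda>k. w (real M - real k + 1) * g (c + real k - 1)"]
      by (simp add: algebra_simps)
    have n1: "nat (int M - 1) = M - 1" by simp
    have r1: "real_of_int (int M - 1) = real M - 1" by simp
    have C: "nabla (nabla_frac_sum c \<gamma> g) (c + of_int m) = 
      rGamma \<gamma> * (\<Sum>k=1..M. w (real M - real k + 1) * g (c + real k))
      - rGamma \<gamma> * (\<Sum>k=1..M-1. w ((real M - 1) - real k + 1) * g (c + real k))"
      unfolding nb[of "nabla_frac_sum c \<gamma> g"] fs_int[of c \<gamma> g "m-1"] fs_int[of c \<gamma> g m]
      unfolding M(1) n1 r1 w_def by simp
    have D: "nabla_frac_sum c \<gamma> (nabla g) (c + of_int m) = 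
       rGamma \<gamma> * (\<Sum>k=1..M. w (real M - real k + 1) * nabla g (c + real k))"
      unfolding fs_int M(1) w_def by simp
    show ?thesis unfolding C D A B by (simp add: M(1) w_def algebra_simps)
  qed
qed

lemma L_pow:
  assumes "\<beta> \<notin> \<int>"
  shows "nabla_pow j (\<lambda>s. rising (s - c) \<beta>) (c + of_int m) =
           (\<Prod>i<j. (\<beta> - real i)) * rising (of_int m) (\<beta> - real j)"
proof (induction j arbitrary: m)
  case 0 then show ?case by simp
next
  case (Suc j)
  have e: "c + of_int m - 1 = c + of_int (m - 1)" by simp
  have ni: "\<beta> - real j \<notin> \<int>"
  proof
    assume "\<beta> - real j \<in> \<int>"
    then have "\<beta> - real j + real j \<in> \<int>" by (intro Ints_add) auto
    then show False using assms by simp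
  qed
  have "nabla_pow (Suc j) (\<lambda>s. rising (s - c) \<beta>) (c + of_int m) =
     (\<Prod>i<j. (\<beta> - real i)) * (rising (of_int m) (\<beta> - real j) - rising (of_int m - 1) (\<beta> - real j))"
    unfolding np_Suc e Suc.IH by (simp add: algebra_simps)
  also have "\<dots> = (\<Prod>i<j. (\<beta> - real i)) * ((\<beta> - real j) * rising (of_int m) (\<beta> - real j - 1))"
    using powB[OF ni, of m] by simp
  finally show ?case by (simp add: algebra_simps)
qed

lemma rG_prod:
  assumes "(z::real) \<notin> \<int>"
  shows "rGamma z * (\<Prod>i<n. (z - 1 - real i)) = rGamma (z - real n)"
proof (induction n)
  case 0 then show ?case by simp
next
  case (Suc n)
  have "(z - real n - 1) * rGamma (z - real n - 1 + 1) = rGamma (z - real n - 1)"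
    by (rule rGamma_plus1)
  then show ?case using Suc by (simp add: algebra_simps)
qed

lemma L1:
  fixes \<alpha> c :: real and m :: int and g :: "real \<Rightarrow> real"
  shows "nabla_frac c (- \<alpha>) (nabla g) (c + of_int m) =
     nabla (nabla_frac c (- \<alpha>) g) (c + of_int m) - rising (of_int m) (\<alpha> - 1) * rGamma \<alpha> * g c"
proof -
  consider "\<alpha> > 0" | "\<alpha> = 0" | "\<alpha> < 0" by linarith
  then show ?thesis
  proof cases
    case 1
    then have F: "nabla_frac c (- \<alpha>) h = nabla_frac_sum c \<alpha> h" for h
      unfolding nabla_frac_def by simp
    show ?thesis unfolding F by (rule L_sum)
  next
    case 2
    then show ?thesis unfolding nabla_frac_def by simp
  next
    case 3
    define n where "n = nat \<lceil>- \<alpha>\<rceil>"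
    define \<nu> where "\<nu> = real n + \<alpha>"
    have F: "nabla_frac c (- \<alpha>) h = nabla_pow n (if \<nu> = 0 then h else nabla_frac_sum c \<nu> h)" for h
      unfolding nabla_frac_def n_def \<nu>_def using 3 by (simp add: Let_def)
    have rn: "real n = of_int \<lceil>- \<alpha>\<rceil>" unfolding n_def using 3 by simp
    have nu0: "\<nu> \<ge> 0" "\<nu> < 1" unfolding \<nu>_def rn by linarith+
    show ?thesis
    proof (cases "\<nu> = 0")
      case True
      have "\<alpha> = - real n" using True unfolding \<nu>_def by simp
      then have "rGamma \<alpha> = 0" by (simp add: rGamma_nonpos_Int)
      then show ?thesis unfolding F using True by (simp add: np_comm)
    next
      case False
      have nuZ: "\<nu> \<notin> \<int>"
      proof
        assume "\<nu> \<in> \<int>"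
        then obtain k where k: "\<nu> = of_int k" by (auto elim: Ints_cases)
        then have "k = 0" using nu0 by linarith
        then show False using False k by simp
      qed
      have nuZ1: "\<nu> - 1 \<notin> \<int>"
      proof
        assume "\<nu> - 1 \<in> \<int>"
        then have "\<nu> - 1 + 1 \<in> \<int>" by (intro Ints_add) auto
        then show False using nuZ by simp
      qed
      define k where "k = rGamma \<nu> * g c"
      define B where "B s = nabla (nabla_frac_sum c \<nu> g) s - k * rising (s - c) (\<nu> - 1)" for s
      have AB: "nabla_frac_sum c \<nu> (nabla g) (c + of_int m') = B (c + of_int m')" for m'
        unfolding B_def k_def L_sum by simp
      have "nabla_frac c (- \<alpha>) (nabla g) (c + of_int m) = nabla_pow n B (c + of_int m)"
        unfolding F using False np_cong[of "nabla_frac_sum c \<nu> (nabla g)" c B, OF AB] by simp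
      also have "\<dots> = nabla_pow n (nabla (nabla_frac_sum c \<nu> g)) (c + of_int m)
          - k * nabla_pow n (\<lambda>s. rising (s - c) (\<nu> - 1)) (c + of_int m)"
        unfolding B_def by (rule np_lin)
      also have "\<dots> = nabla (nabla_frac c (- \<alpha>) g) (c + of_int m)
          - k * ((\<Prod>i<n. (\<nu> - 1 - real i)) * rising (of_int m) (\<nu> - 1 - real n))"
        unfolding L_pow[OF nuZ1] np_comm F using False by simp
      also have "\<nu> - 1 - real n = \<alpha> - 1" unfolding \<nu>_def by simp
      also have "k * ((\<Prod>i<n. (\<nu> - 1 - real i)) * rising (of_int m) (\<alpha> - 1))
         = rising (of_int m) (\<alpha> - 1) * (rGamma \<nu> * (\<Prod>i<n. (\<nu> - 1 - real i))) * g c"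
        unfolding k_def by (simp add: algebra_simps)
      also have "rGamma \<nu> * (\<Prod>i<n. (\<nu> - 1 - real i)) = rGamma \<alpha>"
        unfolding rG_prod[OF nuZ] unfolding \<nu>_def by simp
      finally show ?thesis .
    qed
  qed
qed

lemma np_Suc_fun: "nabla_pow (Suc p) f = nabla (nabla_pow p f)"
  unfolding nabla_pow_def by simp

lemma Lp:
  fixes \<alpha> c :: real and f :: "real \<Rightarrow> real" and p N :: nat
  assumes "p \<ge> 1" "N \<ge> p"
  shows "nabla_frac c (- \<alpha>) (nabla_pow p f) (c + real N) =
           nabla_pow p (nabla_frac c (- \<alpha>) f) (c + real N)
           - (\<Sum>k = 0..p - 1. rising (real N) (\<alpha> - real p + real k)
                 * rGamma (\<alpha> + real k - real p + 1) * nabla_pow k f c)"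
  using assms
proof (induction p arbitrary: N)
  case 0 then show ?case by simp
next
  case (Suc p)
  let ?F = "nabla_frac c (- \<alpha>)"
  have L: "?F (nabla_pow (Suc p) f) (c + real N) =
     nabla (?F (nabla_pow p f)) (c + real N) - rising (real N) (\<alpha> - 1) * rGamma \<alpha> * nabla_pow p f c"
    using L1[of c \<alpha> "nabla_pow p f" "int N"] unfolding np_Suc_fun by simp
  show ?case
  proof (cases "p = 0")
    case True
    then show ?thesis using L by (simp add: np_Suc_fun)
  next
    case False
    have N1: "N - 1 \<ge> p" "N \<ge> 2" using Suc.prems False by auto
    have eN: "c + real N - 1 = c + real (N - 1)" using N1 by (simp add: of_nat_diff)
    have eR: "real N - 1 = real (N - 1)" using N1 by (simp add: of_nat_diff)
    define T where "T j k = rising j (\<alpha> - real p + real k) * rGamma (\<alpha> + real k - real p + 1) * nabla_pow k f c" for j k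
    have D: "nabla (?F (nabla_pow p f)) (c + real N) =
        nabla_pow (Suc p) (?F f) (c + real N) - (\<Sum>k = 0..p - 1. T (real N) k - T (real N - 1) k)"
      unfolding nabla_def np_Suc eN eR using Suc.IH[of N] Suc.IH[of "N - 1"] False N1
      by (simp add: T_def sum_subtractf)
    have T: "T (real N) k - T (real N - 1) k = rising (real N) (\<alpha> - real (Suc p) + real k)
                 * rGamma (\<alpha> + real k - real (Suc p) + 1) * nabla_pow k f c" for k
    proof -
      have "T (real N) k - T (real N - 1) k = (rising (real N) (\<alpha> - real p + real k) - rising (real N - 1) (\<alpha> - real p + real k))
         * rGamma (\<alpha> - real p + real k + 1) * nabla_pow k f c"
        unfolding T_def by (simp add: algebra_simps)
      also have "\<dots> = rising (real N) (\<alpha> - real p + real k - 1) * rGamma (\<alpha> - real p + real k) * nabla_pow k f c"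
        using powA[OF N1(2), of "\<alpha> - real p + real k"] by simp
      finally show ?thesis by (simp add: algebra_simps)
    qed
    have S: "(\<Sum>k = 0..Suc p - 1. rising (real N) (\<alpha> - real (Suc p) + real k)
                 * rGamma (\<alpha> + real k - real (Suc p) + 1) * nabla_pow k f c)
         = (\<Sum>k = 0..p - 1. T (real N) k - T (real N - 1) k)
           + rising (real N) (\<alpha> - 1) * rGamma \<alpha> * nabla_pow p f c"
    proof -
      have "{0..Suc p - 1} = insert p {0..p - 1}" using False by auto
      then show ?thesis unfolding T using False by simp
    qed
    show ?thesis unfolding L D S by simp
  qed
qed

theorem theorem2p11:
  fixes \<alpha> a t :: real and p :: nat and f :: "real \<Rightarrow> real"
  assumes "p \<ge> 1"
    and "t \<in> Nset (a + 2 * real p - 1)"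
  shows "nabla_frac (a + real p - 1) (- \<alpha>) (nabla_pow p f) t =
           nabla_pow p (nabla_frac (a + real p - 1) (- \<alpha>) f) t
           - (\<Sum>k = 0..p - 1. rising (t - (a + real p - 1)) (\<alpha> - real p + real k)
                 * rGamma (\<alpha> + real k - real p + 1) * nabla_pow k f (a + real p - 1))"
proof -
  obtain n where n: "t = a + 2 * real p - 1 + real n" using assms(2) unfolding Nset_def by auto
  have t: "t = (a + real p - 1) + real (p + n)" using n by simp
  have d: "t - (a + real p - 1) = real (p + n)" using n by simp
  show ?thesis unfolding d
    using Lp[OF assms(1), of "p + n" "a + real p - 1" \<alpha> f] unfolding t[symmetric] by simp
qed

end
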